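(* For any ${\bm{p}}\in\Delta_K^+=\{{\bm{p}}\in\mathbb{R}^K:{\bm{p}}>0,\ \sum_kp_k=1\}$, if $L^{\mathrm{same}}({\bm{p}})=L^*_N({\bm{p}})$, then $$\sum_{k=1}^Kp_k\frac{\partial f_k({\bm{p}})}{\partial p_i}=0\quad\text{for all }i\in[K].$$
   Context: Setting: distributions $\mathcal{D}_1,\dots,\mathcal{D}_K$ on $\mathcal{Z}$, a loss $\ell(h,{\bm{z}})$ (all expectations finite), $N\ge1$, a learning algorithm $\mathcal{A}:\mathcal{Z}^N\to\mathcal{H}$. For ${\bm{r}}\in\Delta_K=\{{\bm{r}}\ge0:\sum_kr_k=1\}$, $\bar e_k({\bm{r}})=\mathbb{E}_{S\sim(\sum_jr_j\mathcal{D}_j)^N}\mathbb{E}_{{\bm{z}}\sim\mathcal{D}_k}[\ell(\mathcal{A}(S),{\bm{z}})]$; $f_k({\bm{r}})=\bar e_k({\bm{r}}/|{\bm{r}}|)$ on $\mathbb{R}^K_{\ge0}\setminus\{\mathbf{0}\}$; $L_N({\bm{p}},{\bm{r}})=\sum_kp_kf_k({\bm{r}})$, $L^{\mathrm{same}}({\bm{p}})=L_N({\bm{p}},{\bm{p}})$, $L^*_N({\bm{p}})=\min_{{\bm{r}}\in\Delta_K}L_N({\bm{p}},{\bm{r}})$. *)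

theory Defs
  imports "HOL-Probability.Probability"
begin

text \<open>Index set [K] is modelled by a finite type 'k (K = CARD('k)); vectors in R^K are
functions 'k => real. The data space Z carries the measurable space M0; the distributions
D_1..D_K are probability measures on it. A training set S in Z^N is an element of
PiM {..<N} (%_. .), i.e. a function nat => 'z.\<close>

definition prob_simplex :: "('k::finite \<Rightarrow> real) set" where
  "prob_simplex = {r. (\<forall>k. 0 \<le> r k) \<and> (\<Sum>k\<in>UNIV. r k) = 1}"

definition pos_simplex :: "('k::finite \<Rightarrow> real) set" where
  "pos_simplex = {p. (\<forall>k. 0 < p k) \<and> (\<Sum>k\<in>UNIV. p k) = 1}"

definition mixture :: "'z measure \<Rightarrow> ('k::finite \<Rightarrow> 'z measure) \<Rightarrow> ('k \<Rightarrow> real) \<Rightarrow> 'z measure" where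
  "mixture M0 D r = measure_of (space M0) (sets M0)
      (\<lambda>A. \<Sum>j\<in>UNIV. ennreal (r j) * emeasure (D j) A)"

definition ebar :: "'z measure \<Rightarrow> ('k::finite \<Rightarrow> 'z measure) \<Rightarrow> ('h \<Rightarrow> 'z \<Rightarrow> real)
    \<Rightarrow> ((nat \<Rightarrow> 'z) \<Rightarrow> 'h) \<Rightarrow> nat \<Rightarrow> 'k \<Rightarrow> ('k \<Rightarrow> real) \<Rightarrow> real" where
  "ebar M0 D loss Alg N k r =
     (\<integral>S. (\<integral>z. loss (Alg S) z \<partial>(D k)) \<partial>(PiM {..<N} (\<lambda>_. mixture M0 D r)))"

definition fk :: "'z measure \<Rightarrow> ('k::finite \<Rightarrow> 'z measure) \<Rightarrow> ('h \<Rightarrow> 'z \<Rightarrow> real)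
    \<Rightarrow> ((nat \<Rightarrow> 'z) \<Rightarrow> 'h) \<Rightarrow> nat \<Rightarrow> 'k \<Rightarrow> ('k \<Rightarrow> real) \<Rightarrow> real" where
  "fk M0 D loss Alg N k r = ebar M0 D loss Alg N k (\<lambda>j. r j / (\<Sum>i\<in>UNIV. r i))"

definition LN :: "'z measure \<Rightarrow> ('k::finite \<Rightarrow> 'z measure) \<Rightarrow> ('h \<Rightarrow> 'z \<Rightarrow> real)
    \<Rightarrow> ((nat \<Rightarrow> 'z) \<Rightarrow> 'h) \<Rightarrow> nat \<Rightarrow> ('k \<Rightarrow> real) \<Rightarrow> ('k \<Rightarrow> real) \<Rightarrow> real" where
  "LN M0 D loss Alg N p r = (\<Sum>k\<in>UNIV. p k * fk M0 D loss Alg N k r)"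

definition Lsame :: "'z measure \<Rightarrow> ('k::finite \<Rightarrow> 'z measure) \<Rightarrow> ('h \<Rightarrow> 'z \<Rightarrow> real)
    \<Rightarrow> ((nat \<Rightarrow> 'z) \<Rightarrow> 'h) \<Rightarrow> nat \<Rightarrow> ('k \<Rightarrow> real) \<Rightarrow> real" where
  "Lsame M0 D loss Alg N p = LN M0 D loss Alg N p p"

text \<open>L*_N(p) = min over the prob_simplex (the minimum is attained; we write it as an infimum).\<close>
definition Lstar :: "'z measure \<Rightarrow> ('k::finite \<Rightarrow> 'z measure) \<Rightarrow> ('h \<Rightarrow> 'z \<Rightarrow> real)
    \<Rightarrow> ((nat \<Rightarrow> 'z) \<Rightarrow> 'h) \<Rightarrow> nat \<Rightarrow> ('k \<Rightarrow> real) \<Rightarrow> real" where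
  "Lstar M0 D loss Alg N p = (INF r\<in>prob_simplex. LN M0 D loss Alg N p r)"

end

theory Submission
  imports Defs
begin

lemma mixture_sets:
  assumes "\<And>j. sets (D j) = sets M0"
  shows "sets (mixture M0 D r) = sets M0" "space (mixture M0 D r) = space M0"
proof -
  show "sets (mixture M0 D r) = sets M0"
    unfolding mixture_def by (simp add: sets_measure_of_conv sets.space_closed sets.sigma_sets_eq)
  then show "space (mixture M0 D r) = space M0"
    unfolding mixture_def by (simp add: space_measure_of_conv sets.space_closed)
qed

lemma mixture_emeasure:
  fixes D :: "'k::finite \<Rightarrow> 'z measure"
  assumes sD: "\<And>j. sets (D j) = sets M0" and A: "A \<in> sets M0"
  shows "emeasure (mixture M0 D r) A = (\<Sum>j\<in>UNIV. ennreal (r j) * emeasure (D j) A)"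
  unfolding mixture_def
proof (rule emeasure_measure_of_sigma)
  show "sigma_algebra (space M0) (sets M0)" by (rule sets.sigma_algebra_axioms)
  show "positive (sets M0) (\<lambda>A. \<Sum>j\<in>UNIV. ennreal (r j) * emeasure (D j) A)"
    by (simp add: positive_def)
  show "countably_additive (sets M0) (\<lambda>A. \<Sum>j\<in>UNIV. ennreal (r j) * emeasure (D j) A)"
  proof (rule countably_additiveI)
    fix F :: "nat \<Rightarrow> 'z set" assume F: "range F \<subseteq> sets M0" "disjoint_family F" "\<Union> (range F) \<in> sets M0"
    have "(\<Sum>i. \<Sum>j\<in>UNIV. ennreal (r j) * emeasure (D j) (F i)) = (\<Sum>j\<in>UNIV. \<Sum>i. ennreal (r j) * emeasure (D j) (F i))"
      by (rule suminf_sum) simp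
    also have "\<dots> = (\<Sum>j\<in>UNIV. ennreal (r j) * emeasure (D j) (\<Union> (range F)))"
      using F sD by (simp add: suminf_emeasure)
    finally show "(\<Sum>i. \<Sum>j\<in>UNIV. ennreal (r j) * emeasure (D j) (F i)) = (\<Sum>j\<in>UNIV. ennreal (r j) * emeasure (D j) (\<Union> (range F)))" .
  qed
qed (rule A)

lemma mixture_density:
  fixes D :: "'k::finite \<Rightarrow> 'z measure"
  assumes sD: "\<And>j. sets (D j) = sets M0" and smu: "sets mu = sets M0"
    and hm: "\<And>j. h j \<in> borel_measurable mu" and dens: "\<And>j. density mu (h j) = D j"
  shows "mixture M0 D r = density mu (\<lambda>z. \<Sum>j\<in>UNIV. ennreal (r j) * h j z)"
proof (rule measure_eqI)
  show "sets (mixture M0 D r) = sets (density mu (\<lambda>z. \<Sum>j\<in>UNIV. ennreal (r j) * h j z))"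
    using mixture_sets[of D M0, OF sD] smu by simp
  fix A assume "A \<in> sets (mixture M0 D r)"
  then have A: "A \<in> sets M0" using mixture_sets[of D M0, OF sD] by simp
  then have Amu: "A \<in> sets mu" using smu by simp
  have "emeasure (density mu (\<lambda>z. \<Sum>j\<in>UNIV. ennreal (r j) * h j z)) A
      = (\<integral>\<^sup>+ z. (\<Sum>j\<in>UNIV. ennreal (r j) * h j z) * indicator A z \<partial>mu)"
    using Amu hm by (simp add: emeasure_density)
  also have "\<dots> = (\<integral>\<^sup>+ z. (\<Sum>j\<in>UNIV. ennreal (r j) * (h j z * indicator A z)) \<partial>mu)"
    by (simp add: sum_distrib_right mult.assoc)
  also have "\<dots> = (\<Sum>j\<in>UNIV. \<integral>\<^sup>+ z. ennreal (r j) * (h j z * indicator A z) \<partial>mu)"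
    using hm Amu by (intro nn_integral_sum) auto
  also have "\<dots> = (\<Sum>j\<in>UNIV. ennreal (r j) * \<integral>\<^sup>+ z. h j z * indicator A z \<partial>mu)"
    using hm Amu by (intro sum.cong refl nn_integral_cmult) auto
  also have "\<dots> = (\<Sum>j\<in>UNIV. ennreal (r j) * emeasure (D j) A)"
    using hm Amu by (simp add: dens[symmetric] emeasure_density)
  finally show "emeasure (mixture M0 D r) A = emeasure (density mu (\<lambda>z. \<Sum>j\<in>UNIV. ennreal (r j) * h j z)) A"
    using mixture_emeasure[OF sD A] by simp
qed

lemma mixture_prob:
  fixes D :: "'k::finite \<Rightarrow> 'z measure"
  assumes pD: "\<And>j. prob_space (D j)" and sD: "\<And>j. sets (D j) = sets M0"
    and r: "r \<in> prob_simplex"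
  shows "prob_space (mixture M0 D r)"
proof (rule prob_spaceI)
  have "emeasure (mixture M0 D r) (space M0) = (\<Sum>j\<in>UNIV. ennreal (r j) * emeasure (D j) (space M0))"
    by (rule mixture_emeasure[OF sD]) simp
  also have "\<dots> = (\<Sum>j\<in>UNIV. ennreal (r j))"
  proof (intro sum.cong refl)
    fix j
    have "space (D j) = space M0" using sD[of j] by (rule sets_eq_imp_space_eq)
    then show "ennreal (r j) * emeasure (D j) (space M0) = ennreal (r j)"
      using prob_space.emeasure_space_1[OF pD[of j]] by simp
  qed
  also have "\<dots> = ennreal (\<Sum>j\<in>UNIV. r j)"
    using r by (simp add: prob_simplex_def sum_ennreal)
  also have "\<dots> = 1" using r by (simp add: prob_simplex_def)
  finally show "emeasure (mixture M0 D r) (space (mixture M0 D r)) = 1"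
    using mixture_sets[of D M0, OF sD] by simp
qed

lemma uniform_simplex: "(\<lambda>_. 1 / real CARD('k::finite)) \<in> (prob_simplex :: ('k \<Rightarrow> real) set)"
  by (simp add: prob_simplex_def)

lemma exists_densities:
  fixes D :: "'k::finite \<Rightarrow> 'z measure"
  assumes pD: "\<And>j. prob_space (D j)" and sD: "\<And>j. sets (D j) = sets M0"
  defines "mu \<equiv> mixture M0 D (\<lambda>_. 1 / real CARD('k))"
  shows "\<exists>hr. (\<forall>j. hr j \<in> borel_measurable M0 \<and> (\<forall>z. 0 \<le> hr j z \<and> hr j z \<le> real CARD('k)))
            \<and> (\<forall>j. density mu (\<lambda>z. ennreal (hr j z)) = D j)"
proof -
  define K where "K = real CARD('k)"
  have Kpos: "K > 0" unfolding K_def by simp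
  have pmu: "prob_space mu" unfolding mu_def by (rule mixture_prob[OF pD sD uniform_simplex])
  then interpret mu: prob_space mu .
  have smu: "sets mu = sets M0" unfolding mu_def by (rule mixture_sets[of D M0, OF sD])
  have ac: "absolutely_continuous mu (D j)" for j
    unfolding absolutely_continuous_def
  proof
    fix A assume "A \<in> null_sets mu"
    then have A: "A \<in> sets M0" "emeasure mu A = 0" using smu by auto
    then have "(\<Sum>j\<in>UNIV. ennreal (1 / K) * emeasure (D j) A) = 0"
      using mixture_emeasure[of D M0 A, OF sD A(1)] unfolding mu_def K_def by simp
    then have "\<forall>j. ennreal (1 / K) * emeasure (D j) A = 0" by (simp add: sum_eq_0_iff)
    then have "ennreal (1 / K) * emeasure (D j) A = 0" by blast
    then have "emeasure (D j) A = 0" using Kpos by simp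
    then show "A \<in> null_sets (D j)" using A sD by auto
  qed
  define h where "h j = RN_deriv mu (D j)" for j
  have hm: "h j \<in> borel_measurable mu" for j unfolding h_def by simp
  have dh: "density mu (h j) = D j" for j
    unfolding h_def using ac sD smu by (intro mu.density_RN_deriv) auto
  have "mu = density mu (\<lambda>z. \<Sum>j\<in>UNIV. ennreal (1 / K) * h j z)"
    unfolding K_def mu_def
    by (rule mixture_density[OF sD _ hm[unfolded mu_def] dh[unfolded mu_def]]) (simp add: mixture_sets[of D M0, OF sD])
  moreover have "mu = density mu (\<lambda>_. 1)" by (simp add: density_1)
  ultimately have "density mu (\<lambda>z. \<Sum>j\<in>UNIV. ennreal (1 / K) * h j z) = density mu (\<lambda>_. 1)" by simp
  then have AE1: "AE z in mu. (\<Sum>j\<in>UNIV. ennreal (1 / K) * h j z) = 1"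
    using hm by (subst (asm) mu.density_unique_iff) auto
  have AEK: "AE z in mu. h j z \<le> ennreal K" for j
    using AE1
  proof eventually_elim
    case (elim z)
    have "ennreal (1 / K) * h j z \<le> 1"
      using member_le_sum[of j UNIV "\<lambda>j. ennreal (1 / K) * h j z"] elim by simp
    then have le: "ennreal K * (ennreal (1 / K) * h j z) \<le> ennreal K * 1"
      by (rule mult_left_mono) simp
    have e: "ennreal K * ennreal (1 / K) = 1"
    proof -
      have "ennreal K * ennreal (1 / K) = ennreal (K * (1 / K))"
        using Kpos by (intro ennreal_mult[symmetric]) auto
      also have "K * (1 / K) = 1" using Kpos by simp
      finally show ?thesis by simp
    qed
    have "h j z = (ennreal K * ennreal (1 / K)) * h j z" by (simp only: e mult_1)
    also have "\<dots> = ennreal K * (ennreal (1 / K) * h j z)" by (rule mult.assoc)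
    also have "\<dots> \<le> ennreal K * 1" by (rule le)
    finally show ?case by simp
  qed
  define hr where "hr j z = enn2real (min (h j z) (ennreal K))" for j z
  have hrm: "hr j \<in> borel_measurable M0" for j
  proof -
    have "h j \<in> borel_measurable M0" using hm[of j] by (subst measurable_cong_sets[OF smu[symmetric] refl])
    then show ?thesis unfolding hr_def by measurable
  qed
  have hrb: "0 \<le> hr j z \<and> hr j z \<le> K" for j z
  proof -
    have "enn2real (min (h j z) (ennreal K)) \<le> enn2real (ennreal K)"
      by (rule enn2real_mono) auto
    then show ?thesis unfolding hr_def using Kpos by (simp add: enn2real_nonneg)
  qed
  have "density mu (\<lambda>z. ennreal (hr j z)) = D j" for j
  proof -
    have "density mu (\<lambda>z. ennreal (hr j z)) = density mu (h j)"
    proof (rule density_cong)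
      show "(\<lambda>z. ennreal (hr j z)) \<in> borel_measurable mu" using hrm[of j] by (subst measurable_cong_sets[OF smu refl]) simp
      show "h j \<in> borel_measurable mu" by (rule hm)
      show "AE z in mu. ennreal (hr j z) = h j z"
        using AEK[of j]
      proof eventually_elim
        case (elim z)
        have lt: "h j z < \<top>" using elim ennreal_less_top[of K] by (rule le_less_trans)
        have "min (h j z) (ennreal K) = h j z" using elim by (rule min_absorb1)
        then show ?case unfolding hr_def using lt by (simp only: ennreal_enn2real)
      qed
    qed
    then show ?thesis using dh[of j] by (rule trans)
  qed
  then show ?thesis using hrm hrb unfolding K_def by blast
qed

lemma PiM_density:
  fixes H :: "'z \<Rightarrow> real"
  assumes I: "finite I" and pmu: "prob_space mu" and Hm: "H \<in> borel_measurable mu" and H0: "\<And>z. 0 \<le> H z"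
    and pH: "prob_space (density mu (\<lambda>z. ennreal (H z)))"
  shows "PiM I (\<lambda>_. density mu (\<lambda>z. ennreal (H z))) = density (PiM I (\<lambda>_. mu)) (\<lambda>S. \<Prod>n\<in>I. ennreal (H (S n)))"
proof -
  interpret pH: prob_space "density mu (\<lambda>z. ennreal (H z))" by (rule pH)
  interpret pmu: prob_space mu by (rule pmu)
  interpret PH: product_sigma_finite "\<lambda>_. density mu (\<lambda>z. ennreal (H z))"
    unfolding product_sigma_finite_def by (simp add: pH.sigma_finite_measure_axioms)
  interpret Pmu: product_sigma_finite "\<lambda>_. mu"
    unfolding product_sigma_finite_def by (simp add: pmu.sigma_finite_measure_axioms)
  have Hm': "(\<lambda>z. ennreal (H z)) \<in> borel_measurable mu" using Hm by simp
  show ?thesis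
  proof (rule PH.PiM_eqI[symmetric, OF I])
    show "sets (density (PiM I (\<lambda>_. mu)) (\<lambda>S. \<Prod>n\<in>I. ennreal (H (S n)))) = sets (PiM I (\<lambda>_. density mu (\<lambda>z. ennreal (H z))))"
      unfolding sets_density by (rule sets_PiM_cong) simp_all
    fix A assume A: "\<And>i. i \<in> I \<Longrightarrow> A i \<in> sets (density mu (\<lambda>z. ennreal (H z)))"
    then have A': "\<And>i. i \<in> I \<Longrightarrow> A i \<in> sets mu" by simp
    have PA: "Pi\<^sub>E I A \<in> sets (PiM I (\<lambda>_. mu))" using A' by (intro sets_PiM_I_finite I) auto
    have meas: "(\<lambda>S. \<Prod>n\<in>I. ennreal (H (S n))) \<in> borel_measurable (PiM I (\<lambda>_. mu))"
      using Hm by measurable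
    have "emeasure (density (PiM I (\<lambda>_. mu)) (\<lambda>S. \<Prod>n\<in>I. ennreal (H (S n)))) (Pi\<^sub>E I A)
        = (\<integral>\<^sup>+ S. (\<Prod>n\<in>I. ennreal (H (S n))) * indicator (Pi\<^sub>E I A) S \<partial>PiM I (\<lambda>_. mu))"
      using PA meas by (simp add: emeasure_density)
    also have "\<dots> = (\<integral>\<^sup>+ S. (\<Prod>n\<in>I. ennreal (H (S n)) * indicator (A n) (S n)) \<partial>PiM I (\<lambda>_. mu))"
    proof (rule nn_integral_cong)
      fix S assume S: "S \<in> space (PiM I (\<lambda>_. mu))"
      then have Se: "S \<in> extensional I" by (simp add: space_PiM PiE_def)
      show "(\<Prod>n\<in>I. ennreal (H (S n))) * indicator (Pi\<^sub>E I A) S = (\<Prod>n\<in>I. ennreal (H (S n)) * indicator (A n) (S n))"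
      proof (cases "\<forall>n\<in>I. S n \<in> A n")
        case True
        then have "S \<in> Pi\<^sub>E I A" using Se by (auto simp: PiE_def)
        then show ?thesis using True by (simp add: indicator_def)
      next
        case False
        then obtain n where n: "n \<in> I" "S n \<notin> A n" by blast
        then have "S \<notin> Pi\<^sub>E I A" by (auto simp: PiE_def)
        moreover have "(\<Prod>n\<in>I. ennreal (H (S n)) * indicator (A n) (S n)) = 0"
          using n I by (intro prod_zero) (auto intro!: bexI[of _ n])
        ultimately show ?thesis by simp
      qed
    qed
    also have "\<dots> = (\<Prod>n\<in>I. \<integral>\<^sup>+ z. ennreal (H z) * indicator (A n) z \<partial>mu)"
      using A' Hm by (intro Pmu.product_nn_integral_prod I) auto
    also have "\<dots> = (\<Prod>n\<in>I. emeasure (density mu (\<lambda>z. ennreal (H z))) (A n))"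
      using A' Hm' by (intro prod.cong refl) (simp add: emeasure_density)
    finally show "emeasure (density (PiM I (\<lambda>_. mu)) (\<lambda>S. \<Prod>n\<in>I. ennreal (H (S n)))) (Pi\<^sub>E I A)
       = (\<Prod>n\<in>I. emeasure (density mu (\<lambda>z. ennreal (H z))) (A n))" .
  qed
qed

lemma ebar_poly:
  fixes D :: "'k::finite \<Rightarrow> 'z measure" and loss :: "'h \<Rightarrow> 'z \<Rightarrow> real"
  assumes pD: "\<And>j. prob_space (D j)" and sD: "\<And>j. sets (D j) = sets M0"
    and fin_outer: "\<And>k r. r \<in> prob_simplex \<Longrightarrow>
          integrable (PiM {..<N} (\<lambda>_. mixture M0 D r)) (\<lambda>S. \<integral>z. loss (Alg S) z \<partial>(D k))"
  shows "\<exists>c. \<forall>k. \<forall>r\<in>prob_simplex. ebar M0 D loss Alg N k r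
             = (\<Sum>\<sigma>\<in>PiE {..<N} (\<lambda>_. UNIV). (\<Prod>n<N. r (\<sigma> n)) * c k \<sigma>)"
proof -
  define K where "K = real CARD('k)"
  define u where "u = (\<lambda>_::'k. 1 / real CARD('k))"
  define mu where "mu = mixture M0 D u"
  obtain hr where hr: "(\<forall>j. hr j \<in> borel_measurable M0 \<and> (\<forall>z. 0 \<le> hr j z \<and> hr j z \<le> real CARD('k)))
      \<and> (\<forall>j. density (mixture M0 D (\<lambda>_. 1 / real CARD('k))) (\<lambda>z. ennreal (hr j z)) = D j)"
    using exists_densities[of D M0, OF pD sD] by blast
  have hrm: "\<And>j. hr j \<in> borel_measurable M0" using hr by blast
  have hrb: "\<And>j z. 0 \<le> hr j z \<and> hr j z \<le> K" using hr unfolding K_def by blast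
  have hd: "\<And>j. density mu (\<lambda>z. ennreal (hr j z)) = D j" using hr unfolding mu_def u_def by blast
  have u: "u \<in> prob_simplex" unfolding u_def by (rule uniform_simplex)
  have pmu: "prob_space mu" unfolding mu_def by (rule mixture_prob[OF pD sD u])
  have smu: "sets mu = sets M0" unfolding mu_def by (rule mixture_sets[of D M0, OF sD])
  have hrmu: "hr j \<in> borel_measurable mu" for j
    using hrm[of j] by (subst measurable_cong_sets[OF smu refl])
  have hrmu'[measurable]: "(\<lambda>z. hr j z) \<in> borel_measurable mu" for j using hrmu[of j] by simp
  define P where "P = PiM {..<N} (\<lambda>_. mu)"
  define g where "g k S = (\<integral>z. loss (Alg S) z \<partial>(D k))" for k S
  have gint: "integrable P (g k)" for k
    using fin_outer[OF u, of k] unfolding P_def mu_def g_def by simp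
  have gm[measurable]: "g k \<in> borel_measurable P" for k using gint[of k] by simp
  have hprodm[measurable]: "(\<lambda>S. \<Prod>n<N. hr (\<sigma> n) (S n)) \<in> borel_measurable P" for \<sigma> :: "nat \<Rightarrow> 'k"
    unfolding P_def by measurable
  define c where "c k \<sigma> = (\<integral>S. (\<Prod>n<N. hr (\<sigma> n) (S n)) * g k S \<partial>P)" for k \<sigma>
  have cint: "integrable P (\<lambda>S. (\<Prod>n<N. hr (\<sigma> n) (S n)) * g k S)" for k \<sigma>
  proof (rule Bochner_Integration.integrable_bound)
    show "integrable P (\<lambda>S. K ^ N * g k S)" using gint[of k] by simp
    show "(\<lambda>S. (\<Prod>n<N. hr (\<sigma> n) (S n)) * g k S) \<in> borel_measurable P" by measurable
    show "AE S in P. norm ((\<Prod>n<N. hr (\<sigma> n) (S n)) * g k S) \<le> norm (K ^ N * g k S)"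
    proof (rule AE_I2)
      fix S
      have p0: "0 \<le> (\<Prod>n<N. hr (\<sigma> n) (S n))" using hrb by (simp add: prod_nonneg)
      have "(\<Prod>n<N. hr (\<sigma> n) (S n)) \<le> (\<Prod>n<N. K)" using hrb by (intro prod_mono) auto
      then have pK: "(\<Prod>n<N. hr (\<sigma> n) (S n)) \<le> K ^ N" by simp
      show "norm ((\<Prod>n<N. hr (\<sigma> n) (S n)) * g k S) \<le> norm (K ^ N * g k S)"
        using p0 pK by (simp add: abs_mult mult_right_mono)
    qed
  qed
  show ?thesis
  proof (intro exI allI ballI)
    fix k and r :: "'k \<Rightarrow> real" assume r: "r \<in> prob_simplex"
    have r0: "0 \<le> r j" for j using r by (simp add: prob_simplex_def)
    define H where "H z = (\<Sum>j\<in>UNIV. r j * hr j z)" for z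
    have H0: "0 \<le> H z" for z unfolding H_def using r0 hrb by (simp add: sum_nonneg)
    have Hm[measurable]: "H \<in> borel_measurable mu" unfolding H_def by measurable
    have mixH: "mixture M0 D r = density mu (\<lambda>z. ennreal (H z))"
    proof -
      have "mixture M0 D r = density mu (\<lambda>z. \<Sum>j\<in>UNIV. ennreal (r j) * ennreal (hr j z))"
        by (rule mixture_density[OF sD smu _ hd]) (simp add: hrmu)
      also have "(\<lambda>z. \<Sum>j\<in>UNIV. ennreal (r j) * ennreal (hr j z)) = (\<lambda>z. ennreal (H z))"
      proof
        fix z
        have "(\<Sum>j\<in>UNIV. ennreal (r j) * ennreal (hr j z)) = (\<Sum>j\<in>UNIV. ennreal (r j * hr j z))"
          using r0 hrb by (intro sum.cong refl) (simp add: ennreal_mult)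
        also have "\<dots> = ennreal (H z)" unfolding H_def using r0 hrb
          by (intro sum_ennreal) simp
        finally show "(\<Sum>j\<in>UNIV. ennreal (r j) * ennreal (hr j z)) = ennreal (H z)" .
      qed
      finally show ?thesis .
    qed
    have pH: "prob_space (density mu (\<lambda>z. ennreal (H z)))"
      using mixture_prob[of D M0, OF pD sD r] mixH by simp
    have PiMr: "PiM {..<N} (\<lambda>_. mixture M0 D r) = density P (\<lambda>S. ennreal (\<Prod>n<N. H (S n)))"
    proof -
      have "PiM {..<N} (\<lambda>_. mixture M0 D r) = density P (\<lambda>S. \<Prod>n<N. ennreal (H (S n)))"
        unfolding mixH P_def by (rule PiM_density[OF _ pmu Hm H0 pH]) simp
      also have "(\<lambda>S. \<Prod>n<N. ennreal (H (S n))) = (\<lambda>S. ennreal (\<Prod>n<N. H (S n)))"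
        using H0 by (intro ext prod_ennreal) simp
      finally show ?thesis .
    qed
    have "ebar M0 D loss Alg N k r = (\<integral>S. g k S \<partial>density P (\<lambda>S. ennreal (\<Prod>n<N. H (S n))))"
      unfolding ebar_def g_def PiMr ..
    also have "\<dots> = (\<integral>S. (\<Prod>n<N. H (S n)) *\<^sub>R g k S \<partial>P)"
      by (rule integral_density) (use gm[of k] H0 in \<open>auto simp: P_def prod_nonneg\<close>)
    also have "\<dots> = (\<integral>S. (\<Sum>\<sigma>\<in>PiE {..<N} (\<lambda>_. UNIV). (\<Prod>n<N. r (\<sigma> n)) * ((\<Prod>n<N. hr (\<sigma> n) (S n)) * g k S)) \<partial>P)"
    proof (rule Bochner_Integration.integral_cong[OF refl])
      fix S
      have "(\<Prod>n<N. H (S n)) = (\<Sum>\<sigma>\<in>PiE {..<N} (\<lambda>_. UNIV). \<Prod>n<N. r (\<sigma> n) * hr (\<sigma> n) (S n))"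
        unfolding H_def by (rule prod_sum_PiE) auto
      also have "\<dots> = (\<Sum>\<sigma>\<in>PiE {..<N} (\<lambda>_. UNIV). (\<Prod>n<N. r (\<sigma> n)) * (\<Prod>n<N. hr (\<sigma> n) (S n)))"
        by (simp add: prod.distrib)
      finally show "(\<Prod>n<N. H (S n)) *\<^sub>R g k S = (\<Sum>\<sigma>\<in>PiE {..<N} (\<lambda>_. UNIV). (\<Prod>n<N. r (\<sigma> n)) * ((\<Prod>n<N. hr (\<sigma> n) (S n)) * g k S))"
        by (simp add: sum_distrib_right mult.assoc)
    qed
    also have "\<dots> = (\<Sum>\<sigma>\<in>PiE {..<N} (\<lambda>_. UNIV). \<integral>S. (\<Prod>n<N. r (\<sigma> n)) * ((\<Prod>n<N. hr (\<sigma> n) (S n)) * g k S) \<partial>P)"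
      by (rule Bochner_Integration.integral_sum) (intro integrable_mult_right cint)
    also have "\<dots> = (\<Sum>\<sigma>\<in>PiE {..<N} (\<lambda>_. UNIV). (\<Prod>n<N. r (\<sigma> n)) * c k \<sigma>)"
      unfolding c_def by (intro sum.cong refl integral_mult_right_zero)
    finally show "ebar M0 D loss Alg N k r = (\<Sum>\<sigma>\<in>PiE {..<N} (\<lambda>_. UNIV). (\<Prod>n<N. r (\<sigma> n)) * c k \<sigma>)" .
  qed
qed

lemma differentiable_prod':
  fixes f :: "'a \<Rightarrow> real \<Rightarrow> real"
  assumes "finite A" "\<And>a. a \<in> A \<Longrightarrow> f a differentiable (at x)"
  shows "(\<lambda>t. \<Prod>a\<in>A. f a t) differentiable (at x)"
  using assms by (induction A rule: finite_induct) (auto intro!: differentiable_mult)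

lemma fk_simplex: "r \<in> prob_simplex \<Longrightarrow> fk M0 D loss Alg N k r = ebar M0 D loss Alg N k r"
  unfolding fk_def prob_simplex_def by simp

theorem lemmaB2:
  fixes M0 :: "'z measure" and D :: "'k::finite \<Rightarrow> 'z measure"
    and loss :: "'h \<Rightarrow> 'z \<Rightarrow> real" and Alg :: "(nat \<Rightarrow> 'z) \<Rightarrow> 'h"
    and N :: nat and p :: "'k \<Rightarrow> real"
  assumes N: "1 \<le> N"
    and distr: "\<And>j. prob_space (D j)" "\<And>j. sets (D j) = sets M0"
    and fin_inner: "\<And>k S. S \<in> space (PiM {..<N} (\<lambda>_. M0)) \<Longrightarrow> integrable (D k) (loss (Alg S))"
    and fin_outer: "\<And>k r. r \<in> prob_simplex \<Longrightarrow>
          integrable (PiM {..<N} (\<lambda>_. mixture M0 D r)) (\<lambda>S. \<integral>z. loss (Alg S) z \<partial>(D k))"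
    and p: "p \<in> pos_simplex"
    and opt: "Lsame M0 D loss Alg N p = Lstar M0 D loss Alg N p"
  shows "\<exists>d :: 'k \<Rightarrow> 'k \<Rightarrow> real.
           (\<forall>k i. ((\<lambda>t. fk M0 D loss Alg N k (p(i := t))) has_real_derivative d k i) (at (p i)))
         \<and> (\<forall>i. (\<Sum>k\<in>UNIV. p k * d k i) = 0)"
proof -
  obtain c where c: "\<forall>k. \<forall>r\<in>prob_simplex. ebar M0 D loss Alg N k r
             = (\<Sum>\<sigma>\<in>PiE {..<N} (\<lambda>_. UNIV). (\<Prod>n<N. r (\<sigma> n)) * c k \<sigma>)"
    using ebar_poly[of D M0 N loss Alg, OF distr fin_outer] by blast
  define E where "E k r = (\<Sum>\<sigma>\<in>PiE {..<N} (\<lambda>_. UNIV). (\<Prod>n<N. r (\<sigma> n)) * c k \<sigma>)" for k r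
  have ebarE: "r \<in> prob_simplex \<Longrightarrow> ebar M0 D loss Alg N k r = E k r" for k r
    using c unfolding E_def by blast
  have fks: "fk M0 D loss Alg N k r = ebar M0 D loss Alg N k r" if "r \<in> prob_simplex" for k r
    using that unfolding fk_def prob_simplex_def by simp
  have p0: "0 < p j" for j using p by (simp add: pos_simplex_def)
  have ps: "(\<Sum>j\<in>UNIV. p j) = 1" using p by (simp add: pos_simplex_def)
  have ple: "p j \<le> 1" for j
    using member_le_sum[of j UNIV p] p0 ps by (simp add: less_imp_le)
  have sumupd: "(\<Sum>j\<in>UNIV. (p(i := t)) j) = 1 - p i + t" for i t
  proof -
    have "(\<Sum>j\<in>UNIV. (p(i := t)) j) = (\<Sum>j\<in>UNIV. p j + (if j = i then t - p i else 0))"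
      by (intro sum.cong refl) auto
    also have "\<dots> = 1 + (t - p i)" by (simp add: sum.distrib ps)
    finally show ?thesis by simp
  qed
  define q where "q i t = (\<lambda>j. (p(i := t)) j / (1 - p i + t))" for i t
  have qs: "q i t \<in> prob_simplex" if t: "0 < t" for i t
  proof -
    have den: "0 < 1 - p i + t" using ple[of i] t by simp
    have "0 \<le> q i t j" for j unfolding q_def using den p0[of j] t by (auto intro: divide_nonneg_pos)
    moreover have "(\<Sum>j\<in>UNIV. q i t j) = 1"
    proof -
      have "(\<Sum>j\<in>UNIV. q i t j) = (\<Sum>j\<in>UNIV. (p(i := t)) j) / (1 - p i + t)"
        unfolding q_def by (rule sum_divide_distrib[symmetric])
      then show ?thesis using sumupd[of i t] den by simp
    qed
    ultimately show ?thesis by (simp add: prob_simplex_def)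
  qed
  have fkq: "fk M0 D loss Alg N k (p(i := t)) = ebar M0 D loss Alg N k (q i t)" for k i t
    unfolding fk_def q_def sumupd ..
  have diff: "(\<lambda>t. E k (q i t)) differentiable (at (p i))" for k i
  proof -
    have den: "1 - p i + p i \<noteq> 0" by simp
    have fac: "(\<lambda>t. q i t j) differentiable (at (p i))" for j
    proof (cases "j = i")
      case True
      then show ?thesis unfolding q_def using den
        by (auto intro!: differentiable_divide)
    next
      case False
      then show ?thesis unfolding q_def using den
        by (auto intro!: differentiable_divide)
    qed
    show ?thesis unfolding E_def
      by (intro differentiable_sum ballI differentiable_mult differentiable_prod' fac differentiable_const) (auto intro: finite_PiE)
  qed
  define d where "d k i = deriv (\<lambda>t. E k (q i t)) (p i)" for k i
  have der: "((\<lambda>t. fk M0 D loss Alg N k (p(i := t))) has_real_derivative d k i) (at (p i))" for k i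
  proof (rule has_field_derivative_transform_within_open[of _ _ _ "{0<..}"])
    show "((\<lambda>t. E k (q i t)) has_real_derivative d k i) (at (p i))"
      unfolding d_def using diff DERIV_deriv_iff_real_differentiable by blast
    show "open {0::real<..}" by simp
    show "p i \<in> {0<..}" using p0 by simp
    fix t :: real assume "t \<in> {0<..}"
    then show "E k (q i t) = fk M0 D loss Alg N k (p(i := t))"
      using fkq ebarE qs by simp
  qed
  have bdd: "bdd_below ((LN M0 D loss Alg N p) ` prob_simplex)"
  proof (rule bdd_belowI2)
    fix r :: "'k \<Rightarrow> real" assume r: "r \<in> prob_simplex"
    have r01: "0 \<le> r j \<and> r j \<le> 1" for j
      using r member_le_sum[of j UNIV r] by (auto simp: prob_simplex_def)
    have Eb: "- (\<Sum>\<sigma>\<in>PiE {..<N} (\<lambda>_. UNIV). \<bar>c k \<sigma>\<bar>) \<le> E k r" for k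
    proof -
      have "(\<Sum>\<sigma>\<in>PiE {..<N} (\<lambda>_. UNIV). - \<bar>c k \<sigma>\<bar>) \<le> E k r"
        unfolding E_def
      proof (rule sum_mono)
        fix \<sigma> :: "nat \<Rightarrow> 'k"
        have a: "0 \<le> (\<Prod>n<N. r (\<sigma> n))" using r01 by (simp add: prod_nonneg)
        have b: "(\<Prod>n<N. r (\<sigma> n)) \<le> 1" using r01 by (intro prod_le_1) auto
        have "- \<bar>c k \<sigma>\<bar> \<le> (\<Prod>n<N. r (\<sigma> n)) * (- \<bar>c k \<sigma>\<bar>)"
          using a b mult_right_mono[OF b, of "\<bar>c k \<sigma>\<bar>"] by simp
        also have "\<dots> \<le> (\<Prod>n<N. r (\<sigma> n)) * c k \<sigma>"
          using a by (intro mult_left_mono) auto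
        finally show "- \<bar>c k \<sigma>\<bar> \<le> (\<Prod>n<N. r (\<sigma> n)) * c k \<sigma>" .
      qed
      then show ?thesis by (simp add: sum_negf)
    qed
    have "(\<Sum>k\<in>UNIV. p k * (- (\<Sum>\<sigma>\<in>PiE {..<N} (\<lambda>_. UNIV). \<bar>c k \<sigma>\<bar>))) \<le> (\<Sum>k\<in>UNIV. p k * E k r)"
      using Eb p0 by (intro sum_mono mult_left_mono) (auto simp: less_imp_le)
    also have "\<dots> = LN M0 D loss Alg N p r"
      unfolding LN_def by (intro sum.cong refl arg_cong2[where f=times]) (simp add: fks[OF r] ebarE[OF r])
    finally show "(\<Sum>k\<in>UNIV. p k * (- (\<Sum>\<sigma>\<in>PiE {..<N} (\<lambda>_. UNIV). \<bar>c k \<sigma>\<bar>))) \<le> LN M0 D loss Alg N p r" .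
  qed
  have crit: "(\<Sum>k\<in>UNIV. p k * d k i) = 0" for i
  proof (rule DERIV_local_min)
    show "((\<lambda>t. \<Sum>k\<in>UNIV. p k * fk M0 D loss Alg N k (p(i := t))) has_real_derivative (\<Sum>k\<in>UNIV. p k * d k i)) (at (p i))"
      by (intro DERIV_sum DERIV_cmult der)
    show "0 < p i" by (rule p0)
    show "\<forall>y. \<bar>p i - y\<bar> < p i \<longrightarrow> (\<Sum>k\<in>UNIV. p k * fk M0 D loss Alg N k (p(i := p i))) \<le> (\<Sum>k\<in>UNIV. p k * fk M0 D loss Alg N k (p(i := y)))"
    proof (intro allI impI)
      fix y assume "\<bar>p i - y\<bar> < p i"
      then have y: "0 < y" by simp
      have "(\<Sum>k\<in>UNIV. p k * fk M0 D loss Alg N k (p(i := p i))) = Lstar M0 D loss Alg N p"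
        using opt by (simp add: Lsame_def LN_def)
      also have "\<dots> \<le> LN M0 D loss Alg N p (q i y)"
        unfolding Lstar_def using bdd qs[OF y] by (rule cINF_lower)
      also have "\<dots> = (\<Sum>k\<in>UNIV. p k * fk M0 D loss Alg N k (p(i := y)))"
        unfolding LN_def by (intro sum.cong refl arg_cong2[where f=times]) (simp_all only: fks[OF qs[OF y]] fkq)
      finally show "(\<Sum>k\<in>UNIV. p k * fk M0 D loss Alg N k (p(i := p i))) \<le> (\<Sum>k\<in>UNIV. p k * fk M0 D loss Alg N k (p(i := y)))" .
    qed
  qed
  show ?thesis using der crit by blast
qed

end
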